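(* Let $n,d\ge1$, $B>0$ and $\epsilon_i>0$. For a voter $i$ with dataset $D_i=\{\langle X_1,Z_1\rangle,\dots,\langle X_n,Z_n\rangle\}$, $X_j,Z_j\in\mathbb{R}^d$, let $\overline{\boldsymbol\beta}_i(D_i)$ be a (deterministically chosen) maximizer of $\mathcal{L}(\boldsymbol\beta,D_i)=\sum_{j=1}^n\ln\Phi(\boldsymbol\beta^\top(X_j-Z_j))$ over $\{\boldsymbol\beta\in\mathbb{R}^d:\|\boldsymbol\beta\|_1\le B\}$, where $\Phi$ is the standard normal CDF. Consider the randomized algorithm (Algorithm 2) that outputs $\overline{\boldsymbol\beta}_i^*(D_i)=\overline{\boldsymbol\beta}_i(D_i)+\boldsymbol R$, where $\boldsymbol R$ has $d$ independent coordinates, each a zero-mean Laplace variable with scale $2B/\epsilon_i$. Then for each voter $i$ this algorithm satisfies $\epsilon_i$-differential privacy both in the voter-level distributed sense (VLDP) and in the record-level distributed sense (RLDP).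
   Context: VLDP: for any two datasets $D_i,D_i'$ of voter $i$, each consisting of $n$ records (arbitrarily different), and any measurable set $\mathcal{Y}$ of outputs, $\Pr[Y_i(D_i)\in\mathcal{Y}]\le e^{\epsilon_i}\Pr[Y_i(D_i')\in\mathcal{Y}]$. RLDP: the same inequality required only for pairs $D_i,D_i'$ of $n$-record datasets differing in exactly one record. The Laplace distribution with scale $\lambda$ has density $\frac{1}{2\lambda}e^{-|x|/\lambda}$. *)

theory Defs
  imports "HOL-Probability.Probability"
begin

type_synonym 'd rec = "(real ^ 'd) \<times> (real ^ 'd)"
type_synonym 'd dataset = "'d rec list"

definition Phi :: "real \<Rightarrow> real" where
  "Phi x = measure (density lborel std_normal_density) {..x}"

definition loglik :: "real ^ 'd \<Rightarrow> 'd dataset \<Rightarrow> real" where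
  "loglik \<beta> D = (\<Sum>j<length D. ln (Phi (\<beta> \<bullet> (fst (D ! j) - snd (D ! j)))))"

definition l1norm :: "real ^ 'd \<Rightarrow> real" where
  "l1norm \<beta> = (\<Sum>i\<in>UNIV. \<bar>\<beta> $ i\<bar>)"

definition laplace_density :: "real \<Rightarrow> real \<Rightarrow> real" where
  "laplace_density s x = exp (- \<bar>x\<bar> / s) / (2 * s)"

definition laplace_measure :: "real \<Rightarrow> real measure" where
  "laplace_measure s = density lborel (\<lambda>x. ennreal (laplace_density s x))"

definition laplace_noise :: "real \<Rightarrow> (real ^ 'd::finite) measure" where
  "laplace_noise s =
     distr (PiM UNIV (\<lambda>_. laplace_measure s)) borel (\<lambda>f. \<chi> i. f i)"

definition alg2 :: "('d dataset \<Rightarrow> real ^ 'd::finite) \<Rightarrow> real \<Rightarrow> real \<Rightarrow> 'd dataset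
                    \<Rightarrow> (real ^ 'd) measure" where
  "alg2 betabar B \<epsilon> D = distr (laplace_noise (2 * B / \<epsilon>)) borel (\<lambda>r. betabar D + r)"

definition VLDP :: "('a list \<Rightarrow> 'b measure) \<Rightarrow> nat \<Rightarrow> real \<Rightarrow> bool" where
  "VLDP M n \<epsilon> \<longleftrightarrow>
     (\<forall>D D' Y. length D = n \<longrightarrow> length D' = n \<longrightarrow> Y \<in> sets (M D) \<longrightarrow>
        measure (M D) Y \<le> exp \<epsilon> * measure (M D') Y)"

definition RLDP :: "('a list \<Rightarrow> 'b measure) \<Rightarrow> nat \<Rightarrow> real \<Rightarrow> bool" where
  "RLDP M n \<epsilon> \<longleftrightarrow>
     (\<forall>D D' Y. length D = n \<longrightarrow> length D' = n \<longrightarrow>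
        card {j. j < n \<and> D ! j \<noteq> D' ! j} = 1 \<longrightarrow> Y \<in> sets (M D) \<longrightarrow>
        measure (M D) Y \<le> exp \<epsilon> * measure (M D') Y)"

end

theory Submission
  imports Defs
begin

lemma lap_pos: "s > 0 \<Longrightarrow> laplace_density s x > 0"
  unfolding laplace_density_def by simp

lemma lap_meas[measurable]: "(\<lambda>x. laplace_density s (f x)) \<in> borel_measurable M"
  if [measurable]: "f \<in> borel_measurable M"
  unfolding laplace_density_def by measurable

lemma lap_ratio:
  assumes "s > 0"
  shows "laplace_density s (x - c) \<le> exp (\<bar>c\<bar> / s) * laplace_density s x"
proof -
  have "- \<bar>x - c\<bar> / s \<le> \<bar>c\<bar> / s + - \<bar>x\<bar> / s"
    using assms by (simp add: divide_right_mono field_simps) 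
  then have "exp (- \<bar>x - c\<bar> / s) \<le> exp (\<bar>c\<bar> / s) * exp (- \<bar>x\<bar> / s)"
    by (simp add: exp_add[symmetric])
  then show ?thesis unfolding laplace_density_def using assms
    by (simp add: divide_right_mono)
qed

lemma sets_lap[simp, measurable_cong]: "sets (laplace_measure s) = sets borel"
  by (simp add: laplace_measure_def)

lemma space_lap[simp]: "space (laplace_measure s) = UNIV"
  by (simp add: laplace_measure_def)

lemma sf_shift: "sigma_finite_measure (density lborel (\<lambda>x. ennreal (laplace_density s (x - c))))"
  by (subst sigma_finite_measure.sigma_finite_iff_density_finite[OF sigma_finite_lborel]) auto

lemma sf_lap: "sigma_finite_measure (laplace_measure s)"
  using sf_shift[of s 0] by (simp add: laplace_measure_def)

lemma shift1:
  assumes [measurable]: "A \<in> sets borel"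
  shows "emeasure (laplace_measure s) ((\<lambda>x. x + c) -` A) =
         emeasure (density lborel (\<lambda>x. ennreal (laplace_density s (x - c)))) A"
proof -
  have "emeasure (laplace_measure s) ((\<lambda>x. x + c) -` A) =
        (\<integral>\<^sup>+x. ennreal (laplace_density s x) * indicator A (x + c) \<partial>lborel)"
    unfolding laplace_measure_def
    using measurable_sets[of "\<lambda>x::real. x + c" borel borel A]
    by (subst emeasure_density) (auto intro!: nn_integral_cong split: split_indicator)
  also have "\<dots> = (\<integral>\<^sup>+x. ennreal (laplace_density s (x - c)) * indicator A x \<partial>distr lborel borel ((+) c))"
    by (subst nn_integral_distr) (auto simp: add.commute)
  also have "\<dots> = (\<integral>\<^sup>+x. ennreal (laplace_density s (x - c)) * indicator A x \<partial>lborel)"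
    by (simp add: lborel_distr_plus)
  also have "\<dots> = emeasure (density lborel (\<lambda>x. ennreal (laplace_density s (x - c)))) A"
    by (simp add: emeasure_density)
  finally show ?thesis .
qed

lemma lap_finite:
  assumes "s > 0"
  shows "emeasure (laplace_measure s) UNIV < \<infinity>"
proof -
  let ?e = "exponential_density (1/s)"
  have le: "laplace_density s x \<le> ?e x + ?e (- x)" for x
  proof (cases "x < 0")
    case True
    then have "?e (- x) = exp (x / s) / s" by (simp add: exponential_density_def)
    moreover have "?e x \<ge> 0" using assms by (simp add: exponential_density_def)
    moreover have "laplace_density s x = exp (x / s) / (2 * s)" using True by (simp add: laplace_density_def)
    moreover have "exp (x / s) / (2 * s) \<le> exp (x / s) / s" using assms by (simp add: frac_le)
    ultimately show ?thesis by linarith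
  next
    case False
    then have "?e x = exp (- x / s) / s" by (simp add: exponential_density_def)
    moreover have "?e (- x) \<ge> 0" using assms by (simp add: exponential_density_def)
    moreover have "laplace_density s x = exp (- x / s) / (2 * s)" using False by (simp add: laplace_density_def)
    moreover have "exp (- x / s) / (2 * s) \<le> exp (- x / s) / s" using assms by (simp add: frac_le)
    ultimately show ?thesis by linarith
  qed
  have e1: "(\<integral>\<^sup>+x. ennreal (?e x) \<partial>lborel) = 1"
  proof -
    interpret prob_space "density lborel (?e)" using prob_space_exponential_density[of "1/s"] assms by simp
    show ?thesis using emeasure_space_1 by (simp add: emeasure_density)
  qed
  have e2: "(\<integral>\<^sup>+x. ennreal (?e (- x)) \<partial>lborel) = 1"
  proof -
    have "(\<integral>\<^sup>+x. ennreal (?e (- x)) \<partial>lborel) = (\<integral>\<^sup>+x. ennreal (?e x) \<partial>distr lborel borel uminus)"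
      by (subst nn_integral_distr) auto
    then show ?thesis using e1 by (simp add: lborel_distr_uminus)
  qed
  have "emeasure (laplace_measure s) UNIV = (\<integral>\<^sup>+x. ennreal (laplace_density s x) \<partial>lborel)"
    unfolding laplace_measure_def by (subst emeasure_density) auto
  also have "\<dots> \<le> (\<integral>\<^sup>+x. ennreal (?e x) + ennreal (?e (- x)) \<partial>lborel)"
    using le assms by (intro nn_integral_mono) (simp add: ennreal_plus[symmetric] del: ennreal_plus)
  also have "\<dots> = 2"
    by (subst nn_integral_add) (auto simp: e1 e2)
  finally show ?thesis by (simp add: le_less_trans)
qed

lemma indicator_PiE_UNIV:
  "(indicator (Pi\<^sub>E UNIV B) f :: ennreal) = (\<Prod>i\<in>(UNIV::'d::finite set). indicator (B i) (f i))"
proof (cases "\<forall>i. f i \<in> B i")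
  case True then show ?thesis by (simp add: indicator_def PiE_UNIV_domain)
next
  case False
  then obtain j where "f j \<notin> B j" by blast
  then show ?thesis
    using prod_zero[of UNIV "\<lambda>i. (indicator (B i) (f i) :: ennreal)"] by (auto simp: indicator_def PiE_UNIV_domain)
qed

lemma shift_bound:
  fixes c :: "'d::finite \<Rightarrow> real"
  assumes s: "s > 0" and A[measurable]: "A \<in> sets (PiM UNIV (\<lambda>_::'d. (borel::real measure)))"
  shows "emeasure (PiM UNIV (\<lambda>_::'d. laplace_measure s)) {f. (\<lambda>i. f i + c i) \<in> A}
     \<le> ennreal (exp ((\<Sum>i\<in>UNIV. \<bar>c i\<bar>) / s)) * emeasure (PiM UNIV (\<lambda>_. laplace_measure s)) A"
proof -
  define M where "M = (\<lambda>_::'d. laplace_measure s)"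
  define N where "N = (\<lambda>i::'d. density lborel (\<lambda>x. ennreal (laplace_density s (x - c i))))"
  define r where "r = (\<lambda>i x. laplace_density s (x - c i) / laplace_density s x)"
  define g where "g = (\<lambda>f::'d \<Rightarrow> real. ennreal (\<Prod>i\<in>UNIV. r i (f i)))"
  define P where "P = PiM UNIV M"
  define K where "K = exp ((\<Sum>i\<in>UNIV. \<bar>c i\<bar>) / s)"
  interpret N: product_sigma_finite N
    unfolding product_sigma_finite_def N_def using sf_shift by blast
  interpret M: product_sigma_finite M
    unfolding product_sigma_finite_def M_def using sf_lap by blast
  have setsN[measurable_cong]: "sets (N i) = sets borel" for i by (simp add: N_def)
  have setsM[measurable_cong]: "sets (M i) = sets borel" for i by (simp add: M_def)
  have sP: "sets (PiM UNIV N) = sets (PiM UNIV (\<lambda>_. borel))"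
    by (intro sets_PiM_cong) (auto simp: setsN)
  have sP2[measurable_cong]: "sets P = sets (PiM UNIV (\<lambda>_. borel))"
    unfolding P_def by (intro sets_PiM_cong) (auto simp: setsM)
  have spP: "space P = UNIV" unfolding P_def by (simp add: space_PiM M_def)
  have shm[measurable]: "(\<lambda>f i. f i + c i) \<in> P \<rightarrow>\<^sub>M PiM UNIV (\<lambda>_. borel)"
    unfolding measurable_cong_sets[OF sP2 refl]
    by (rule measurable_PiM_single'[where f="\<lambda>i f. f i + c i"]) auto
  have rmeas[measurable]: "r i \<in> borel_measurable borel" for i
    unfolding r_def by measurable
  have gmeas[measurable]: "g \<in> borel_measurable P"
    unfolding g_def by measurable
  have 1: "distr P (PiM UNIV (\<lambda>_. borel)) (\<lambda>f i. f i + c i) = PiM UNIV N"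
  proof (rule N.PiM_eqI)
    show "sets (distr P (PiM UNIV (\<lambda>_. borel)) (\<lambda>f i. f i + c i)) = sets (PiM UNIV N)"
      using sP by simp
    fix B assume B: "\<And>i. i \<in> UNIV \<Longrightarrow> B i \<in> sets (N i)"
    then have B'[measurable]: "B i \<in> sets borel" for i using setsN by auto
    have "emeasure (distr P (PiM UNIV (\<lambda>_. borel)) (\<lambda>f i. f i + c i)) (Pi\<^sub>E UNIV B)
          = emeasure P ((\<lambda>f i. f i + c i) -` Pi\<^sub>E UNIV B \<inter> space P)"
      by (rule emeasure_distr) (auto intro!: sets_PiM_I_finite)
    also have "(\<lambda>f i. f i + c i) -` Pi\<^sub>E UNIV B \<inter> space P = Pi\<^sub>E UNIV (\<lambda>i. (\<lambda>x. x + c i) -` B i)"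
      by (auto simp: spP PiE_UNIV_domain)
    also have "emeasure P (Pi\<^sub>E UNIV (\<lambda>i. (\<lambda>x. x + c i) -` B i))
               = (\<Prod>i\<in>UNIV. emeasure (M i) ((\<lambda>x. x + c i) -` B i))"
      unfolding P_def
    proof (rule M.emeasure_PiM)
      fix i show "(\<lambda>x. x + c i) -` B i \<in> sets (M i)"
        using measurable_sets[of "\<lambda>x::real. x + c i" borel borel "B i"] by (simp add: setsM)
    qed simp
    also have "\<dots> = (\<Prod>i\<in>UNIV. emeasure (N i) (B i))"
      by (intro prod.cong refl) (simp add: M_def N_def shift1)
    finally show "emeasure (distr P (PiM UNIV (\<lambda>_. borel)) (\<lambda>f i. f i + c i)) (Pi\<^sub>E UNIV B)
      = (\<Prod>i\<in>UNIV. emeasure (N i) (B i))" .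
  qed simp
  have 2: "density P g = PiM UNIV N"
  proof (rule N.PiM_eqI)
    show "sets (density P g) = sets (PiM UNIV N)"
      using sP sP2 by simp
    fix B assume B: "\<And>i. i \<in> UNIV \<Longrightarrow> B i \<in> sets (N i)"
    then have B'[measurable]: "B i \<in> sets borel" for i using setsN by auto
    have "emeasure (density P g) (Pi\<^sub>E UNIV B) = (\<integral>\<^sup>+f. g f * indicator (Pi\<^sub>E UNIV B) f \<partial>P)"
      by (rule emeasure_density) (auto intro!: sets_PiM_I_finite)
    also have "\<dots> = (\<integral>\<^sup>+f. (\<Prod>i\<in>UNIV. ennreal (r i (f i)) * indicator (B i) (f i)) \<partial>P)"
    proof (intro nn_integral_cong)
      fix f
      have "g f = (\<Prod>i\<in>UNIV. ennreal (r i (f i)))"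
        unfolding g_def using s
        by (subst prod_ennreal) (auto simp: r_def lap_pos less_imp_le)
      then show "g f * indicator (Pi\<^sub>E UNIV B) f = (\<Prod>i\<in>UNIV. ennreal (r i (f i)) * indicator (B i) (f i))"
        by (simp add: indicator_PiE_UNIV prod.distrib)
    qed
    also have "\<dots> = (\<Prod>i\<in>UNIV. \<integral>\<^sup>+x. ennreal (r i x) * indicator (B i) x \<partial>M i)"
      unfolding P_def by (rule M.product_nn_integral_prod) (auto simp: setsM)
    also have "\<dots> = (\<Prod>i\<in>UNIV. emeasure (N i) (B i))"
    proof (intro prod.cong refl)
      fix i
      have "(\<integral>\<^sup>+x. ennreal (r i x) * indicator (B i) x \<partial>M i)
            = (\<integral>\<^sup>+x. ennreal (laplace_density s x) * (ennreal (r i x) * indicator (B i) x) \<partial>lborel)"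
        unfolding M_def laplace_measure_def by (subst nn_integral_density) auto
      also have "\<dots> = (\<integral>\<^sup>+x. ennreal (laplace_density s (x - c i)) * indicator (B i) x \<partial>lborel)"
      proof (intro nn_integral_cong)
        fix x
        have a: "laplace_density s x > 0" "laplace_density s (x - c i) > 0" using lap_pos[OF s] by auto
        have "ennreal (laplace_density s x) * ennreal (r i x) = ennreal (laplace_density s x * r i x)"
          using a by (intro ennreal_mult[symmetric]) (auto simp: r_def)
        also have "laplace_density s x * r i x = laplace_density s (x - c i)"
          using a by (simp add: r_def)
        finally show "ennreal (laplace_density s x) * (ennreal (r i x) * indicator (B i) x) =
             ennreal (laplace_density s (x - c i)) * indicator (B i) x"
          by (simp add: mult.assoc[symmetric])
      qed
      also have "\<dots> = emeasure (N i) (B i)"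
        unfolding N_def by (subst emeasure_density) auto
      finally show "(\<integral>\<^sup>+x. ennreal (r i x) * indicator (B i) x \<partial>M i) = emeasure (N i) (B i)" .
    qed
    finally show "emeasure (density P g) (Pi\<^sub>E UNIV B) = (\<Prod>i\<in>UNIV. emeasure (N i) (B i))" .
  qed simp
  have gle: "g f \<le> ennreal K" for f
  proof -
    have "(\<Prod>i\<in>UNIV. r i (f i)) \<le> (\<Prod>i\<in>UNIV. exp (\<bar>c i\<bar> / s))"
    proof (rule prod_mono)
      fix i
      show "0 \<le> r i (f i) \<and> r i (f i) \<le> exp (\<bar>c i\<bar> / s)"
        using lap_ratio[OF s, of "f i" "c i"] lap_pos[OF s, of "f i"] lap_pos[OF s, of "f i - c i"]
        by (auto simp: r_def pos_divide_le_eq)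
    qed
    also have "\<dots> = K" unfolding K_def by (simp add: exp_sum sum_divide_distrib)
    finally show ?thesis unfolding g_def by (rule ennreal_leI)
  qed
  have "{f. (\<lambda>i. f i + c i) \<in> A} = (\<lambda>f i. f i + c i) -` A \<inter> space P"
    by (auto simp: spP)
  then have "emeasure P {f. (\<lambda>i. f i + c i) \<in> A} = emeasure (distr P (PiM UNIV (\<lambda>_. borel)) (\<lambda>f i. f i + c i)) A"
    by (simp add: emeasure_distr)
  also have "\<dots> = emeasure (density P g) A" by (simp add: 1 2)
  also have "\<dots> = (\<integral>\<^sup>+f. g f * indicator A f \<partial>P)"
    by (rule emeasure_density) auto
  also have "\<dots> \<le> (\<integral>\<^sup>+f. ennreal K * indicator A f \<partial>P)"
    by (intro nn_integral_mono) (auto simp: gle split: split_indicator)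
  also have "\<dots> = ennreal K * emeasure P A"
    by (rule nn_integral_cmult_indicator) auto
  finally show ?thesis unfolding P_def M_def K_def .
qed

lemma vec_meas: "(\<lambda>f. \<chi> i. f i) \<in> borel_measurable (PiM UNIV (\<lambda>_::'d::finite. (borel::real measure)))"
proof (subst borel_measurable_euclidean_space, intro ballI)
  fix b :: "real^'d" assume "b \<in> Basis"
  then obtain j where b: "b = axis j 1" by (auto simp: Basis_vec_def)
  show "(\<lambda>x. (\<chi> i. x i) \<bullet> b) \<in> borel_measurable (PiM UNIV (\<lambda>_. borel))"
    unfolding b by (simp add: inner_axis)
qed

theorem theorem3:
  fixes n :: nat and B \<epsilon> :: real
    and betabar :: "'d dataset \<Rightarrow> real ^ 'd::finite"
  assumes "n \<ge> 1" and "B > 0" and "\<epsilon> > 0"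
    and "\<And>D. length D = n \<Longrightarrow> l1norm (betabar D) \<le> B \<and>
            (\<forall>\<beta>. l1norm \<beta> \<le> B \<longrightarrow> loglik \<beta> D \<le> loglik (betabar D) D)"
  shows "VLDP (alg2 betabar B \<epsilon>) n \<epsilon> \<and> RLDP (alg2 betabar B \<epsilon>) n \<epsilon>"
proof -
  define s where "s = 2 * B / \<epsilon>"
  have s: "s > 0" using assms by (simp add: s_def)
  define P where "P = PiM UNIV (\<lambda>_::'d. laplace_measure s)"
  have spP: "space P = UNIV" by (simp add: P_def space_PiM)
  have sP[measurable_cong]: "sets P = sets (PiM UNIV (\<lambda>_::'d. (borel::real measure)))"
    unfolding P_def by (intro sets_PiM_cong) auto
  have vm[measurable]: "(\<lambda>f. \<chi> i. f i) \<in> borel_measurable P"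
    using vec_meas by (simp add: measurable_cong_sets[OF sP refl])
  have alg: "alg2 betabar B \<epsilon> D = distr P borel (\<lambda>f. betabar D + (\<chi> i. f i))" for D
    unfolding alg2_def laplace_noise_def s_def[symmetric] P_def[symmetric]
    by (subst distr_distr) (auto simp: comp_def)
  interpret M: product_sigma_finite "\<lambda>_::'d. laplace_measure s"
    unfolding product_sigma_finite_def using sf_lap by blast
  have fin: "emeasure P (space P) \<noteq> \<infinity>"
  proof -
    have "emeasure P (space P) = emeasure P (Pi\<^sub>E UNIV (\<lambda>_. UNIV))" by (simp add: spP)
    also have "\<dots> = (\<Prod>i\<in>(UNIV::'d set). emeasure (laplace_measure s) UNIV)"
      unfolding P_def by (rule M.emeasure_PiM) auto
    finally show ?thesis using lap_finite[OF s] by (simp add: power_eq_top_ennreal_iff)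
  qed
  have key: "measure (alg2 betabar B \<epsilon> D) Y \<le> exp \<epsilon> * measure (alg2 betabar B \<epsilon> D') Y"
    if D: "length D = n" "length D' = n" and Y: "Y \<in> sets (alg2 betabar B \<epsilon> D)" for D D' Y
  proof -
    define b where "b = betabar D"
    define b' where "b' = betabar D'"
    have Y'[measurable]: "Y \<in> sets borel" using Y by (simp add: alg)
    define c where "c = (\<lambda>i. (b - b') $ i)"
    define A where "A = {f::'d \<Rightarrow> real. b' + (\<chi> i. f i) \<in> Y}"
    have A: "A \<in> sets (PiM UNIV (\<lambda>_::'d. (borel::real measure)))"
    proof -
      have "A = (\<lambda>f. b' + (\<chi> i. f i)) -` Y \<inter> space P" by (auto simp: A_def spP)
      also have "\<dots> \<in> sets P" by measurable
      finally show ?thesis using sP by simp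
    qed
    have eq: "{f. (\<lambda>i. f i + c i) \<in> A} = {f. b + (\<chi> i. f i) \<in> Y}"
    proof -
      have "b' + (\<chi> i. f i + c i) = b + (\<chi> i. f i)" for f :: "'d \<Rightarrow> real"
        by (simp add: vec_eq_iff c_def)
      then show ?thesis by (auto simp: A_def)
    qed
    have e1: "emeasure (alg2 betabar B \<epsilon> D) Y = emeasure P {f. b + (\<chi> i. f i) \<in> Y}"
      unfolding alg b_def by (subst emeasure_distr) (auto simp: spP vimage_def)
    have e2: "emeasure (alg2 betabar B \<epsilon> D') Y = emeasure P A"
      unfolding alg b'_def A_def by (subst emeasure_distr) (auto simp: spP vimage_def)
    have l1: "(\<Sum>i\<in>UNIV. \<bar>c i\<bar>) \<le> 2 * B"
    proof -
      have "(\<Sum>i\<in>UNIV. \<bar>c i\<bar>) \<le> (\<Sum>i\<in>UNIV. \<bar>b $ i\<bar> + \<bar>b' $ i\<bar>)"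
        by (intro sum_mono) (simp add: c_def abs_triangle_ineq4)
      also have "\<dots> = l1norm b + l1norm b'" by (simp add: l1norm_def sum.distrib)
      also have "\<dots> \<le> 2 * B" using assms(4)[OF D(1)] assms(4)[OF D(2)] by (simp add: b_def b'_def)
      finally show ?thesis .
    qed
    have sumle: "(\<Sum>i\<in>UNIV. \<bar>c i\<bar>) / s \<le> \<epsilon>"
      using l1 assms by (simp add: s_def field_simps)
    have "emeasure (alg2 betabar B \<epsilon> D) Y
          \<le> ennreal (exp ((\<Sum>i\<in>UNIV. \<bar>c i\<bar>) / s)) * emeasure (alg2 betabar B \<epsilon> D') Y"
      unfolding e1 e2 eq[symmetric] P_def using shift_bound[OF s A, of c] by simp
    also have "\<dots> \<le> ennreal (exp \<epsilon>) * emeasure (alg2 betabar B \<epsilon> D') Y"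
      using sumle by (intro mult_right_mono ennreal_leI) auto
    finally have le: "emeasure (alg2 betabar B \<epsilon> D) Y \<le> ennreal (exp \<epsilon>) * emeasure (alg2 betabar B \<epsilon> D') Y" .
    have fin2: "emeasure (alg2 betabar B \<epsilon> D'') Y \<noteq> \<infinity>" for D''
    proof -
      have "emeasure (alg2 betabar B \<epsilon> D'') Y \<le> emeasure P (space P)"
        unfolding alg by (subst emeasure_distr) (auto intro!: emeasure_mono)
      then show ?thesis using fin by (auto simp: top_unique)
    qed
    have "ennreal (measure (alg2 betabar B \<epsilon> D) Y) \<le> ennreal (exp \<epsilon> * measure (alg2 betabar B \<epsilon> D') Y)"
      using le fin2 by (simp add: emeasure_eq_ennreal_measure ennreal_mult)
    then show ?thesis by (simp add: ennreal_le_iff)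
  qed
  have V: "VLDP (alg2 betabar B \<epsilon>) n \<epsilon>"
    unfolding VLDP_def using key by blast
  moreover have "RLDP (alg2 betabar B \<epsilon>) n \<epsilon>"
    unfolding RLDP_def using key by blast
  ultimately show ?thesis by blast
qed
end
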